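(* Let $\psi_{i,j}\ge 0$ for bidders $i\in[n]$ ($n\ge 2$) and types $j\in[m]$. Define $\mathcal{B}=\min_{i'}\sum_j\max_{i\ne i'}\psi_{i,j}$ and $\tilde{\mathcal{B}}=\sum_j\max_{i\ne i^*}\psi_{i,j}$, where $i^*=\arg\max_i\sum_{j\in d(i)}\psi_{i,j}$. Then $\tilde{\mathcal{B}}/2\le\mathcal{B}\le\tilde{\mathcal{B}}$.
   Context: Here $\psi_{i,j}=p_jv_{i,j}$ in a probabilistic single-item auction (type probabilities $p_j$, valuations $v_{i,j}$). For a type $j$, $w_1(j)$ is the bidder maximizing $\psi_{i,j}$ (ties broken by a fixed priority order on bidders), and $d(i)=\{j: w_1(j)=i\}$. Ties in the choice of $i^*$ are broken arbitrarily. *)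

theory Defs
  imports Complex_Main
begin

text \<open>The fixed priority order on bidders is given by an injective rank function:
  among tied maximizers, the one with the smallest rank wins.\<close>

definition w1 :: "(nat \<Rightarrow> nat) \<Rightarrow> nat \<Rightarrow> (nat \<Rightarrow> nat \<Rightarrow> real) \<Rightarrow> nat \<Rightarrow> nat" where
  "w1 rank n psi j = (THE i. i < n \<and> (\<forall>i'<n. psi i' j \<le> psi i j) \<and>
      (\<forall>i'<n. (\<forall>k<n. psi k j \<le> psi i' j) \<longrightarrow> rank i \<le> rank i'))"

definition dset :: "(nat \<Rightarrow> nat) \<Rightarrow> nat \<Rightarrow> nat \<Rightarrow> (nat \<Rightarrow> nat \<Rightarrow> real) \<Rightarrow> nat \<Rightarrow> nat set" where
  "dset rank n m psi i = {j. j < m \<and> w1 rank n psi j = i}"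

definition max_other :: "nat \<Rightarrow> (nat \<Rightarrow> nat \<Rightarrow> real) \<Rightarrow> nat \<Rightarrow> nat \<Rightarrow> real" where
  "max_other n psi i' j = Max {psi i j | i. i < n \<and> i \<noteq> i'}"

definition Bval :: "nat \<Rightarrow> nat \<Rightarrow> (nat \<Rightarrow> nat \<Rightarrow> real) \<Rightarrow> real" where
  "Bval n m psi = Min {(\<Sum>j<m. max_other n psi i' j) | i'. i' < n}"

definition Btilde :: "nat \<Rightarrow> nat \<Rightarrow> (nat \<Rightarrow> nat \<Rightarrow> real) \<Rightarrow> nat \<Rightarrow> real" where
  "Btilde n m psi istar = (\<Sum>j<m. max_other n psi istar j)"

end

theory Submission
  imports Defs
begin

lemma w1_props:
  assumes n: "n \<ge> 1" and inj: "inj_on rank {..<n}"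
  shows "w1 rank n psi j < n \<and> (\<forall>i'<n. psi i' j \<le> psi (w1 rank n psi j) j)"
proof -
  let ?P = "\<lambda>i. i < n \<and> (\<forall>i'<n. psi i' j \<le> psi i j)"
  have fin: "finite ((\<lambda>i. psi i j) ` {..<n})" by simp
  have ne: "(\<lambda>i. psi i j) ` {..<n} \<noteq> {}" using n by (auto simp: lessThan_empty_iff)
  obtain i0 where i0: "i0 < n" "psi i0 j = Max ((\<lambda>i. psi i j) ` {..<n})"
    using Max_in[OF fin ne] by auto
  have "?P i0" using i0 fin by auto
  then obtain i1 where i1: "?P i1" "\<forall>y. ?P y \<longrightarrow> rank i1 \<le> rank y"
    using ex_has_least_nat[of ?P i0 rank] by blast
  have Q: "i1 < n \<and> (\<forall>i'<n. psi i' j \<le> psi i1 j) \<and>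
      (\<forall>i'<n. (\<forall>k<n. psi k j \<le> psi i' j) \<longrightarrow> rank i1 \<le> rank i')"
    using i1 by blast
  have U: "\<And>x. x < n \<and> (\<forall>i'<n. psi i' j \<le> psi x j) \<and>
      (\<forall>i'<n. (\<forall>k<n. psi k j \<le> psi i' j) \<longrightarrow> rank x \<le> rank i') \<Longrightarrow> x = i1"
  proof -
    fix x assume x: "x < n \<and> (\<forall>i'<n. psi i' j \<le> psi x j) \<and>
      (\<forall>i'<n. (\<forall>k<n. psi k j \<le> psi i' j) \<longrightarrow> rank x \<le> rank i')"
    then have "rank x = rank i1" using Q by (meson le_antisym)
    then show "x = i1" using inj x Q by (auto dest: inj_onD)
  qed
  have "w1 rank n psi j = i1" unfolding w1_def using Q U by (rule the_equality) 
  then show ?thesis using Q by simp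
qed

theorem claim4:
  fixes n m :: nat and psi :: "nat \<Rightarrow> nat \<Rightarrow> real" and rank :: "nat \<Rightarrow> nat" and istar :: nat
  assumes "n \<ge> 2"
    and "\<And>i j. i < n \<Longrightarrow> j < m \<Longrightarrow> psi i j \<ge> 0"
    and "inj_on rank {..<n}"
    and "istar < n"
    and "\<And>i. i < n \<Longrightarrow>
           (\<Sum>j\<in>dset rank n m psi i. psi i j) \<le> (\<Sum>j\<in>dset rank n m psi istar. psi istar j)"
  shows "Btilde n m psi istar / 2 \<le> Bval n m psi \<and> Bval n m psi \<le> Btilde n m psi istar"
proof -
  note n = assms(1) and nn = assms(2) and inj = assms(3) and ist = assms(4) and best = assms(5)
  define w where "w j = w1 rank n psi j" for j
  define M where "M j = psi (w j) j" for j
  have W: "w j < n" "\<And>i'. i' < n \<Longrightarrow> psi i' j \<le> M j" for j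
    using w1_props[OF _ inj, of psi j] n unfolding w_def M_def by auto
  have Mnn: "j < m \<Longrightarrow> M j \<ge> 0" for j using W nn by (meson order.trans)
  have mo_ge: "i < n \<Longrightarrow> i \<noteq> i' \<Longrightarrow> psi i j \<le> max_other n psi i' j" for i i' j
    unfolding max_other_def by (rule Max_ge) auto
  have mo_le: "max_other n psi i' j \<le> M j" if "i' < n" for i' j
  proof -
    have "{psi i j | i. i < n \<and> i \<noteq> i'} \<noteq> {}"
    proof (cases "i' = 0")
      case True then show ?thesis using n by (auto intro!: exI[of _ 1])
    next
      case False then show ?thesis using n by (auto intro!: exI[of _ 0])
    qed
    then show ?thesis unfolding max_other_def using W by (subst Max_le_iff) auto
  qed
  have mo_ge_M: "j < m \<Longrightarrow> w j \<noteq> i' \<Longrightarrow> M j \<le> max_other n psi i' j" for i' j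
    using mo_ge W unfolding M_def by auto
  have mo_nn: "i' < n \<Longrightarrow> j < m \<Longrightarrow> 0 \<le> max_other n psi i' j" for i' j
  proof -
    assume a: "i' < n" "j < m"
    obtain i where "i < n" "i \<noteq> i'"
    proof (cases "i' = 0")
      case True then show ?thesis using n that[of 1] by auto
    next
      case False then show ?thesis using n that[of 0] by auto
    qed
    then show ?thesis using mo_ge nn a by (meson order.trans)
  qed
  define T where "T = (\<Sum>j<m. M j)"
  define S where "S i = (\<Sum>j\<in>dset rank n m psi i. psi i j)" for i
  have dsub: "dset rank n m psi i \<subseteq> {..<m}" for i unfolding dset_def by auto
  have S_M: "S i = (\<Sum>j\<in>dset rank n m psi i. M j)" for i
    unfolding S_def M_def w_def dset_def by (rule sum.cong) auto
  have key: "T - S i' \<le> (\<Sum>j<m. max_other n psi i' j)" if "i' < n" for i'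
  proof -
    have "T - S i' = (\<Sum>j\<in>{..<m} - dset rank n m psi i'. M j)"
      unfolding T_def S_M using sum_diff[OF _ dsub, of M i'] by simp
    also have "\<dots> \<le> (\<Sum>j\<in>{..<m} - dset rank n m psi i'. max_other n psi i' j)"
      by (rule sum_mono) (auto simp: dset_def w_def intro!: mo_ge_M)
    also have "\<dots> \<le> (\<Sum>j<m. max_other n psi i' j)"
      by (rule sum_mono2) (auto intro: mo_nn that)
    finally show ?thesis .
  qed
  have key2: "S istar \<le> (\<Sum>j<m. max_other n psi i' j)" if "i' < n" "i' \<noteq> istar" for i'
  proof -
    have "S istar \<le> (\<Sum>j\<in>dset rank n m psi istar. max_other n psi i' j)"
      unfolding S_M by (rule sum_mono) (use that in \<open>auto simp: dset_def w_def intro!: mo_ge_M\<close>)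
    also have "\<dots> \<le> (\<Sum>j<m. max_other n psi i' j)"
      by (rule sum_mono2) (use dsub that in \<open>auto intro: mo_nn\<close>)
    finally show ?thesis .
  qed
  have BtT: "Btilde n m psi istar \<le> T"
    unfolding Btilde_def T_def by (rule sum_mono) (rule mo_le[OF ist])
  have Btnn: "0 \<le> Btilde n m psi istar"
    unfolding Btilde_def by (rule sum_nonneg) (auto intro: mo_nn ist)
  let ?A = "{(\<Sum>j<m. max_other n psi i' j) | i'. i' < n}"
  have finA: "finite ?A" by simp
  have inA: "Btilde n m psi istar \<in> ?A" unfolding Btilde_def using ist by auto
  have bound: "Btilde n m psi istar / 2 \<le> x" if xA: "x \<in> ?A" for x
  proof -
    obtain i' where i': "i' < n" "x = (\<Sum>j<m. max_other n psi i' j)" using xA by auto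
    show ?thesis
    proof (cases "i' = istar")
      case True then show ?thesis using i' Btnn unfolding Btilde_def by simp
    next
      case False
      have "T - S i' \<le> x" "S istar \<le> x" "S i' \<le> S istar"
        using key[OF i'(1)] key2[OF i'(1) False] best[OF i'(1)] i' unfolding S_def by auto
      then show ?thesis using BtT by linarith
    qed
  qed
  have "Bval n m psi \<le> Btilde n m psi istar" unfolding Bval_def using finA inA by (rule Min_le)
  moreover have "Btilde n m psi istar / 2 \<le> Bval n m psi"
    unfolding Bval_def using finA inA bound by (subst Min_ge_iff) auto
  ultimately show ?thesis by simp
qed

end
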